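(* Let $X$ be a normal Hausdorff topological space, $\Phi$ a local semiflow on $X$, $\mathscr A$ an attractor of $\Phi$, and $A$ an attractor of $\Phi$ in $\mathscr A$, with dual repeller $A^*=\mathscr A\setminus\Omega_{\mathscr A}(A)$. Let $\gamma:\mathbb R\to\mathscr A$ be a full solution with $\gamma(0)=x\in\mathscr A$. Then: (1) if $\omega(\gamma)\cap A^*\ne\emptyset$, then $\gamma(\mathbb R)\subset A^*$; (2) if $\alpha(\gamma)\cap\overline A^{\mathscr A}\ne\emptyset$, then $\gamma(\mathbb R)\subset A$, where $\overline A^{\mathscr A}$ is the closure of $A$ in $\mathscr A$; (3) if $x\in\mathscr A\setminus(A\cup A^* )$, then $\alpha(\gamma)\subset A^*$ and $\omega(\gamma)\subset A$.
   Context: A local semiflow $\Phi$ on $X$ is a continuous map from an open subset $\mathcal D_\Phi\subset\mathbb R^+\times X$ to $X$ such that: (i) for each $x$ there is $T_x\in(0,\infty]$ with $(t,x)\in\mathcal D_\Phi$ iff $t\in[0,T_x)$; (ii) $\Phi(0,x)=x$; (iii) if $(t+s,x)\in\mathcal D_\Phi$ with $t,s\ge0$ then $\Phi(t+s,x)=\Phi(t,\Phi(s,x))$. Write $\Phi(t)x=\Phi(t,x)$, $\Phi(J)M=\{\Phi(t)x:x\in M,\ t\in J\cap[0,T_x)\}$, $\Phi(t)M=\Phi(\{t\})M$. A full solution is $\gamma:\mathbb R\to X$ with $\gamma(t)=\Phi(t-s)\gamma(s)$ for all $s\le t$. $\omega(\gamma)=\{y:\exists t_n\to\infty,\ \gamma(t_n)\to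 y\}$, $\alpha(\gamma)=\{y:\exists t_n\to-\infty,\ \gamma(t_n)\to y\}$. Convention: $U$ is a neighborhood of $A$ (in a given space) if the closure of $A$ is contained in the interior of $U$. A set $K$ is invariant if $\Phi(t)K\subset K$ and $K\subset\Phi(t)K$ for all $t\ge0$. $K$ attracts $B$ if $T_x=\infty$ for all $x\in B$ and for every neighborhood $V$ of $K$ there is $t_0>0$ with $\Phi(t)B\subset V$ for all $t>t_0$. A set is s-compact if every sequence in it has a subsequence converging to a point of the set. An attractor is a nonempty s-compact invariant set $\mathscr A$ for which there is a neighborhood $N$ of $\mathscr A$ such that $\mathscr A$ attracts $N$ and every s-compact invariant subset of $N$ is contained in $\mathscr A$. The restriction $\Phi|_{\mathscr A}$ is a global semiflow on $\mathscr A$ (subspace topology); an attractor of $\Phi$ in $\mathscr A$ is an attractor of $\Phi|_{\mathscr A}$ with all topological notions taken in $\mathscr A$, and $\Omega_{\mathscr A}(A)=\{x\in\mathscr A: A \text{ attracts } \{x\} \text{ under } \Phi|_{\mathscr A}\}$ is its region of attraction in $\mathscr A$. *)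

theory Defs
  imports "HOL-Analysis.Analysis"
begin

text \<open>A local semiflow on the space X is represented by its domain
  D \<subseteq> [0,\<infinity>) \<times> X and the map Phi (meaningful on D).\<close>

definition local_semiflow ::
  "'a topology \<Rightarrow> (real \<times> 'a) set \<Rightarrow> (real \<Rightarrow> 'a \<Rightarrow> 'a) \<Rightarrow> bool" where
  "local_semiflow X D Phi \<longleftrightarrow>
     D \<subseteq> {0..} \<times> topspace X \<and>
     openin (prod_topology (top_of_set {0::real..}) X) D \<and>
     continuous_map (subtopology (prod_topology euclideanreal X) D) X (\<lambda>(t, x). Phi t x) \<and>
     (\<forall>x\<in>topspace X. \<exists>T::ereal. T > 0 \<and> (\<forall>t. (t, x) \<in> D \<longleftrightarrow> 0 \<le> t \<and> ereal t < T)) \<and>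
     (\<forall>x\<in>topspace X. Phi 0 x = x) \<and>
     (\<forall>x t s. 0 \<le> t \<and> 0 \<le> s \<and> (t + s, x) \<in> D \<longrightarrow>
        (s, x) \<in> D \<and> (t, Phi s x) \<in> D \<and> Phi (t + s) x = Phi t (Phi s x))"

definition sf_image ::
  "(real \<times> 'a) set \<Rightarrow> (real \<Rightarrow> 'a \<Rightarrow> 'a) \<Rightarrow> real set \<Rightarrow> 'a set \<Rightarrow> 'a set" where
  "sf_image D Phi J M = {Phi t x | t x. x \<in> M \<and> t \<in> J \<and> (t, x) \<in> D}"

definition nbhd_of :: "'a topology \<Rightarrow> 'a set \<Rightarrow> 'a set \<Rightarrow> bool" where
  "nbhd_of T U A \<longleftrightarrow> U \<subseteq> topspace T \<and> T closure_of A \<subseteq> T interior_of U"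

definition sf_invariant ::
  "(real \<times> 'a) set \<Rightarrow> (real \<Rightarrow> 'a \<Rightarrow> 'a) \<Rightarrow> 'a set \<Rightarrow> bool" where
  "sf_invariant D Phi K \<longleftrightarrow>
     (\<forall>t\<ge>0. sf_image D Phi {t} K \<subseteq> K \<and> K \<subseteq> sf_image D Phi {t} K)"

definition sf_attracts ::
  "'a topology \<Rightarrow> (real \<times> 'a) set \<Rightarrow> (real \<Rightarrow> 'a \<Rightarrow> 'a) \<Rightarrow> 'a set \<Rightarrow> 'a set \<Rightarrow> bool" where
  "sf_attracts T D Phi K B \<longleftrightarrow>
     (\<forall>x\<in>B. \<forall>t\<ge>0. (t, x) \<in> D) \<and>
     (\<forall>V. nbhd_of T V K \<longrightarrow> (\<exists>t0>0. \<forall>t>t0. sf_image D Phi {t} B \<subseteq> V))"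

definition s_compact :: "'a topology \<Rightarrow> 'a set \<Rightarrow> bool" where
  "s_compact T S \<longleftrightarrow>
     (\<forall>u::nat \<Rightarrow> 'a. (\<forall>n. u n \<in> S) \<longrightarrow>
        (\<exists>r y. strict_mono r \<and> y \<in> S \<and> limitin T (u \<circ> r) y sequentially))"

definition sf_attractor ::
  "'a topology \<Rightarrow> (real \<times> 'a) set \<Rightarrow> (real \<Rightarrow> 'a \<Rightarrow> 'a) \<Rightarrow> 'a set \<Rightarrow> bool" where
  "sf_attractor T D Phi A \<longleftrightarrow>
     A \<noteq> {} \<and> s_compact T A \<and> sf_invariant D Phi A \<and>
     (\<exists>N. nbhd_of T N A \<and> sf_attracts T D Phi A N \<and>
        (\<forall>K. K \<subseteq> N \<and> s_compact T K \<and> sf_invariant D Phi K \<longrightarrow> K \<subseteq> A))"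

definition sf_restrict :: "(real \<times> 'a) set \<Rightarrow> 'a set \<Rightarrow> (real \<times> 'a) set" where
  "sf_restrict D S = D \<inter> (UNIV \<times> S)"

definition sf_attractor_in ::
  "'a topology \<Rightarrow> (real \<times> 'a) set \<Rightarrow> (real \<Rightarrow> 'a \<Rightarrow> 'a) \<Rightarrow> 'a set \<Rightarrow> 'a set \<Rightarrow> bool" where
  "sf_attractor_in X D Phi S A \<longleftrightarrow> sf_attractor (subtopology X S) (sf_restrict D S) Phi A"

definition region_of_attraction_in ::
  "'a topology \<Rightarrow> (real \<times> 'a) set \<Rightarrow> (real \<Rightarrow> 'a \<Rightarrow> 'a) \<Rightarrow> 'a set \<Rightarrow> 'a set \<Rightarrow> 'a set" where
  "region_of_attraction_in X D Phi S A =
     {x \<in> S. sf_attracts (subtopology X S) (sf_restrict D S) Phi A {x}}"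

definition full_solution ::
  "'a topology \<Rightarrow> (real \<times> 'a) set \<Rightarrow> (real \<Rightarrow> 'a \<Rightarrow> 'a) \<Rightarrow> (real \<Rightarrow> 'a) \<Rightarrow> bool" where
  "full_solution X D Phi \<gamma> \<longleftrightarrow>
     (\<forall>t. \<gamma> t \<in> topspace X) \<and>
     (\<forall>s t. s \<le> t \<longrightarrow> (t - s, \<gamma> s) \<in> D \<and> \<gamma> t = Phi (t - s) (\<gamma> s))"

definition omega_limit :: "'a topology \<Rightarrow> (real \<Rightarrow> 'a) \<Rightarrow> 'a set" where
  "omega_limit X \<gamma> = {y. \<exists>tn::nat \<Rightarrow> real. filterlim tn at_top sequentially \<and>
                           limitin X (\<gamma> \<circ> tn) y sequentially}"

definition alpha_limit :: "'a topology \<Rightarrow> (real \<Rightarrow> 'a) \<Rightarrow> 'a set" where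
  "alpha_limit X \<gamma> = {y. \<exists>tn::nat \<Rightarrow> real. filterlim tn at_bot sequentially \<and>
                           limitin X (\<gamma> \<circ> tn) y sequentially}"

end

theory Submission
  imports Defs
begin

lemma s_compact_sub: "s_compact T S \<Longrightarrow> S \<subseteq> topspace T"
proof
  fix z assume a: "s_compact T S" "z \<in> S"
  then obtain r y where "limitin T ((\<lambda>n. z) \<circ> r) y sequentially"
    using a(1)[unfolded s_compact_def, rule_format, of "\<lambda>n. z"] a(2) by auto
  then have "eventually (\<lambda>n. z \<in> topspace T) sequentially"
    unfolding limitin_def o_def by (meson openin_topspace)
  then show "z \<in> topspace T" by simp
qed

theorem proposition6p2:
  fixes X :: "'a topology" and D :: "(real \<times> 'a) set" and Phi :: "real \<Rightarrow> 'a \<Rightarrow> 'a"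
    and \<A> A :: "'a set" and \<gamma> :: "real \<Rightarrow> 'a" and x :: 'a
  assumes "normal_space X" and "Hausdorff_space X"
    and "local_semiflow X D Phi"
    and "sf_attractor X D Phi \<A>"
    and "sf_attractor_in X D Phi \<A> A"
    and "full_solution X D Phi \<gamma>"
    and "range \<gamma> \<subseteq> \<A>"
    and "\<gamma> 0 = x"
  defines "Astar \<equiv> \<A> - region_of_attraction_in X D Phi \<A> A"
  shows "(omega_limit X \<gamma> \<inter> Astar \<noteq> {} \<longrightarrow> range \<gamma> \<subseteq> Astar) \<and>
         (alpha_limit X \<gamma> \<inter> (subtopology X \<A>) closure_of A \<noteq> {} \<longrightarrow> range \<gamma> \<subseteq> A) \<and>
         (x \<in> \<A> - (A \<union> Astar) \<longrightarrow> alpha_limit X \<gamma> \<subseteq> Astar \<and> omega_limit X \<gamma> \<subseteq> A)"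
proof -
  note normal = assms(1) and haus = assms(2) and lsf = assms(3)
  define T where "T = subtopology X \<A>"
  define D' where "D' = sf_restrict D \<A>"
  define C where "C = T closure_of A"
  define Om where "Om = region_of_attraction_in X D Phi \<A> A"
  have Astar: "Astar = \<A> - Om" using Astar_def Om_def by simp
  from assms(4) obtain N0 where scA: "s_compact X \<A>" and invA: "sf_invariant D Phi \<A>"
    and N0: "nbhd_of X N0 \<A>" "sf_attracts X D Phi \<A> N0"
    unfolding sf_attractor_def by blast
  from assms(5) obtain N where scAA: "s_compact T A" and invAA: "sf_invariant D' Phi A"
    and N: "nbhd_of T N A" "sf_attracts T D' Phi A N"
    and maxN: "\<And>K. K \<subseteq> N \<Longrightarrow> s_compact T K \<Longrightarrow> sf_invariant D' Phi K \<Longrightarrow> K \<subseteq> A"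
    unfolding sf_attractor_in_def sf_attractor_def T_def D'_def by blast
  have AX: "\<A> \<subseteq> topspace X" using s_compact_sub[OF scA] .
  have topT: "topspace T = topspace X \<inter> \<A>" unfolding T_def by simp
  have AA: "A \<subseteq> \<A>" using s_compact_sub[OF scAA] topT by blast
  have "\<A> \<subseteq> N0"
    using closure_of_subset[OF AX] N0(1) interior_of_subset[of X N0] unfolding nbhd_of_def by blast
  then have dom: "\<And>z t. z \<in> \<A> \<Longrightarrow> 0 \<le> t \<Longrightarrow> (t, z) \<in> D"
    using N0(2) unfolding sf_attracts_def by blast
  have dom': "\<And>z t. z \<in> \<A> \<Longrightarrow> 0 \<le> t \<Longrightarrow> (t, z) \<in> D'"
    using dom unfolding D'_def sf_restrict_def by blast
  have inv: "\<And>z t. z \<in> \<A> \<Longrightarrow> 0 \<le> t \<Longrightarrow> Phi t z \<in> \<A>"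
  proof -
    fix z t assume "z \<in> \<A>" "0 \<le> (t::real)"
    then have "Phi t z \<in> sf_image D Phi {t} \<A>" unfolding sf_image_def using dom by blast
    then show "Phi t z \<in> \<A>" using invA \<open>0 \<le> t\<close> unfolding sf_invariant_def by blast
  qed
  have invAs: "\<And>z t. z \<in> A \<Longrightarrow> 0 \<le> t \<Longrightarrow> Phi t z \<in> A"
  proof -
    fix z t assume "z \<in> A" "0 \<le> (t::real)"
    then have "Phi t z \<in> sf_image D' Phi {t} A" unfolding sf_image_def using dom' AA by blast
    then show "Phi t z \<in> A" using invAA \<open>0 \<le> t\<close> unfolding sf_invariant_def by blast
  qed
  have semi: "\<And>z t s. z \<in> \<A> \<Longrightarrow> 0 \<le> t \<Longrightarrow> 0 \<le> s \<Longrightarrow> Phi (t + s) z = Phi t (Phi s z)"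
  proof -
    fix z t s assume h: "z \<in> \<A>" "0 \<le> (t::real)" "0 \<le> (s::real)"
    have P: "\<forall>x t s. 0 \<le> t \<and> 0 \<le> s \<and> (t + s, x) \<in> D \<longrightarrow>
        (s, x) \<in> D \<and> (t, Phi s x) \<in> D \<and> Phi (t + s) x = Phi t (Phi s x)"
      using lsf unfolding local_semiflow_def by (elim conjE) assumption
    have "(t + s, z) \<in> D" using dom h by simp
    then show "Phi (t + s) z = Phi t (Phi s z)" using P h by blast
  qed
  have cont: "\<And>t. 0 \<le> t \<Longrightarrow> continuous_map T T (Phi t)"
  proof -
    fix t :: real assume t: "0 \<le> t"
    have c1: "continuous_map (subtopology (prod_topology euclideanreal X) D) X (\<lambda>(t, x). Phi t x)"
      using lsf unfolding local_semiflow_def by (elim conjE) assumption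
    have "continuous_map T (prod_topology euclideanreal X) (\<lambda>z. (t, z))"
      unfolding T_def
      by (intro continuous_map_pairedI continuous_map_const[THEN iffD2]) 
         (auto simp: continuous_map_from_subtopology)
    moreover have "(\<lambda>z. (t, z)) \<in> topspace T \<rightarrow> D" using dom t topT by auto
    ultimately have "continuous_map T (subtopology (prod_topology euclideanreal X) D) (\<lambda>z. (t, z))"
      by (simp add: continuous_map_in_subtopology)
    from continuous_map_compose[OF this c1]
    have "continuous_map T X (Phi t)" by (simp add: o_def)
    then show "continuous_map T T (Phi t)"
      unfolding T_def using inv t by (auto simp: continuous_map_in_subtopology)
  qed
  have hausT: "Hausdorff_space T" unfolding T_def using haus by (rule Hausdorff_space_subtopology)
  have limTX: "\<And>f l F. limitin T f l F \<Longrightarrow> limitin X f l F"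
    unfolding T_def by (simp add: limitin_subtopology)
  have SCA: "\<exists>r y. strict_mono r \<and> y \<in> \<A> \<and> limitin T (u \<circ> r) y sequentially"
    if u: "\<And>n. u n \<in> \<A>" for u :: "nat \<Rightarrow> 'a"
  proof -
    obtain r y where "strict_mono r" "y \<in> \<A>" "limitin X (u \<circ> r) y sequentially"
      using scA u unfolding s_compact_def by meson
    then show ?thesis
      unfolding T_def using u by (auto simp: limitin_subtopology)
  qed
  have limA: "y \<in> \<A> \<and> limitin T f y sequentially"
    if l: "limitin X f y sequentially" and f: "\<And>n. f n \<in> \<A>" for f y
  proof -
    obtain r y' where r: "strict_mono r" "y' \<in> \<A>" "limitin T (f \<circ> r) y' sequentially"
      using SCA f by blast
    have "y = y'" using limitin_Hausdorff_unique[OF limitin_subsequence[OF r(1) l] limTX[OF r(3)]] haus by simp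
    then show ?thesis using r(2) l f unfolding T_def by (simp add: limitin_subtopology)
  qed
  have CA: "C \<subseteq> \<A>" unfolding C_def using closure_of_subset_topspace[of T A] topT by blast
  have closedC: "closedin T C" unfolding C_def by simp
  have AC: "A \<subseteq> C" unfolding C_def using closure_of_subset[of A T] AA topT s_compact_sub[OF scAA] by blast
  have CN: "C \<subseteq> T interior_of N" using N(1) unfolding nbhd_of_def C_def by blast
  then have CN': "C \<subseteq> N" using interior_of_subset[of T N] by blast
  have NA: "N \<subseteq> \<A>" using N(1) topT unfolding nbhd_of_def by blast
  have SCC: "\<exists>r y. strict_mono r \<and> y \<in> C \<and> limitin T (u \<circ> r) y sequentially"
    if u: "\<And>n. u n \<in> C" for u :: "nat \<Rightarrow> 'a"
  proof -
    obtain r y where r: "strict_mono r" "y \<in> \<A>" "limitin T (u \<circ> r) y sequentially"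
      using SCA u CA by blast
    have "y \<in> C" by (rule limitin_closedin[OF r(3) closedC]) (use u in auto)
    then show ?thesis using r by blast
  qed
  have invC: "Phi t z \<in> C" if "z \<in> C" "0 \<le> t" for z t
  proof -
    have "Phi t ` C \<subseteq> T closure_of (Phi t ` A)"
      unfolding C_def by (rule continuous_map_image_closure_subset[OF cont[OF \<open>0 \<le> t\<close>]])
    also have "\<dots> \<subseteq> C" unfolding C_def using invAs \<open>0 \<le> t\<close> by (intro closure_of_mono) auto
    finally show ?thesis using that by blast
  qed
  have unif: "\<exists>t0>0. \<forall>t>t0. \<forall>z\<in>N. Phi t z \<in> V" if hV: "nbhd_of T V A" for V
  proof -
    obtain t0 where "t0 > 0" "\<forall>t>t0. sf_image D' Phi {t} N \<subseteq> V"
      using N(2) hV unfolding sf_attracts_def by blast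
    moreover have "Phi t z \<in> sf_image D' Phi {t} N" if "z \<in> N" "t > t0" for z t
      unfolding sf_image_def using that dom' NA \<open>t0 > 0\<close> by fastforce
    ultimately show ?thesis by blast
  qed
  have Om_att: "\<exists>t0>0. \<forall>t>t0. Phi t z \<in> V" if hz: "z \<in> Om" and hV: "nbhd_of T V A" for z V
  proof -
    have z: "z \<in> \<A>" "sf_attracts T D' Phi A {z}" using hz
      unfolding Om_def region_of_attraction_in_def T_def D'_def by auto
    obtain t0 where "t0 > 0" "\<forall>t>t0. sf_image D' Phi {t} {z} \<subseteq> V"
      using z(2) hV unfolding sf_attracts_def by blast
    moreover have "Phi t z \<in> sf_image D' Phi {t} {z}" if "t > t0" for t
      unfolding sf_image_def using that dom' z \<open>t0 > 0\<close> by fastforce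
    ultimately show ?thesis by blast
  qed
  have N_Om: "N \<subseteq> Om"
  proof
    fix z assume z: "z \<in> N"
    have mono: "sf_image D' Phi {t} {z} \<subseteq> sf_image D' Phi {t} N" for t
      using z unfolding sf_image_def by blast
    have "sf_attracts T D' Phi A {z}" unfolding sf_attracts_def
    proof (intro conjI)
      show "\<forall>x\<in>{z}. \<forall>t\<ge>0. (t,x) \<in> D'" using N(2) z unfolding sf_attracts_def by blast
      show "\<forall>V. nbhd_of T V A \<longrightarrow> (\<exists>t0>0. \<forall>t>t0. sf_image D' Phi {t} {z} \<subseteq> V)"
        using N(2) mono unfolding sf_attracts_def by (meson subset_trans)
    qed
    then show "z \<in> Om" using z NA unfolding Om_def region_of_attraction_in_def T_def D'_def by auto
  qed
  have Csep: "\<exists>U W. openin X U \<and> openin X W \<and> z \<in> W \<and> disjnt U W \<and> nbhd_of T (U \<inter> \<A>) A"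
    if z: "z \<in> \<A>" "z \<notin> C" for z
  proof -
    have Ceq: "C = \<A> \<inter> X closure_of A" unfolding C_def T_def closure_of_subtopology using AA
      by (simp add: Int_absorb1)
    then have "z \<notin> X closure_of A" using z by blast
    moreover have "closedin X {z}"
    proof -
      have "z \<in> topspace X" using z AX by blast
      then show ?thesis using closedin_t1_singleton[OF Hausdorff_imp_t1_space[OF haus]] by blast
    qed
    moreover have "disjnt (X closure_of A) {z}" using \<open>z \<notin> X closure_of A\<close> unfolding disjnt_iff by blast
    ultimately obtain U W where UW: "openin X U" "openin X W" "X closure_of A \<subseteq> U" "{z} \<subseteq> W" "disjnt U W"
      using normal[unfolded normal_space_def, rule_format, of "X closure_of A" "{z}"] by auto
    have op: "openin T (U \<inter> \<A>)" unfolding T_def openin_subtopology using UW(1) by blast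
    have "U \<inter> \<A> \<subseteq> topspace T" using openin_subset[OF UW(1)] topT by blast
    moreover have "C \<subseteq> T interior_of (U \<inter> \<A>)" unfolding interior_of_openin[OF op] using Ceq UW(3) by blast
    ultimately have "nbhd_of T (U \<inter> \<A>) A" unfolding nbhd_of_def C_def by blast
    then show ?thesis using UW by blast
  qed
  have Cchar: "z \<in> C" if hz: "z \<in> \<A>" and hV: "\<And>V. nbhd_of T V A \<Longrightarrow> z \<in> V" for z
  proof (rule ccontr)
    assume "z \<notin> C"
    then obtain U W where "openin X U" "openin X W" "z \<in> W" "disjnt U W" "nbhd_of T (U \<inter> \<A>) A"
      using Csep hz by blast
    then show False using hV by (auto simp: disjnt_iff)
  qed
  have fs: "\<gamma> t = Phi (t - s) (\<gamma> s)" if "s \<le> t" for s t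
    using assms(6) that unfolding full_solution_def by blast
  have gA: "\<gamma> t \<in> \<A>" for t using assms(7) by blast
  have limPhi: "limitin T (Phi t \<circ> f) (Phi t l) F" if "limitin T f l F" "0 \<le> t" for f l F t
    using continuous_map_limit[OF cont[OF that(2)] that(1)] .
  have omega_C: "omega_limit X \<gamma> \<subseteq> C" if hs: "\<gamma> s \<in> Om" for s
  proof
    fix y assume "y \<in> omega_limit X \<gamma>"
    then obtain tn where tn: "filterlim tn at_top sequentially" "limitin X (\<gamma> \<circ> tn) y sequentially"
      unfolding omega_limit_def by blast
    have yA: "y \<in> \<A>" using limA[OF tn(2)] gA by simp
    show "y \<in> C"
    proof (rule ccontr)
      assume "y \<notin> C"
      then obtain U W where UW: "openin X U" "openin X W" "y \<in> W" "disjnt U W" "nbhd_of T (U \<inter> \<A>) A"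
        using Csep yA by blast
      obtain t0 where t0: "t0 > 0" "\<forall>t>t0. Phi t (\<gamma> s) \<in> U \<inter> \<A>" using Om_att[OF hs UW(5)] by blast
      have e1: "eventually (\<lambda>n. (\<gamma> \<circ> tn) n \<in> W) sequentially"
        using tn(2) UW(2,3) unfolding limitin_def by blast
      have e2: "eventually (\<lambda>n. s + t0 < tn n) sequentially" using tn(1) filterlim_at_top_dense by blast
      obtain n where n: "(\<gamma> \<circ> tn) n \<in> W" "s + t0 < tn n"
        using eventually_conj[OF e1 e2] unfolding eventually_sequentially by blast
      have "\<gamma> (tn n) = Phi (tn n - s) (\<gamma> s)" using fs[of s "tn n"] n(2) t0(1) by simp
      then have "\<gamma> (tn n) \<in> U" using t0(2) n(2) by simp
      then show False using n(1) UW(4) by (auto simp: disjnt_iff)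
    qed
  qed
  have backC: "\<gamma> s \<in> C" if h: "\<And>s. \<exists>t\<le>s. \<gamma> t \<in> N" for s
  proof (rule Cchar[OF gA])
    fix V assume V: "nbhd_of T V A"
    obtain t0 where t0: "t0 > 0" "\<forall>t>t0. \<forall>z\<in>N. Phi t z \<in> V" using unif[OF V] by blast
    obtain t where t: "t \<le> s - t0 - 1" "\<gamma> t \<in> N" using h by blast
    have "\<gamma> s = Phi (s - t) (\<gamma> t)" using fs[of t s] t t0 by simp
    then show "\<gamma> s \<in> V" using t0 t by simp
  qed
  define K where "K = {z \<in> C. \<forall>t\<ge>0. \<exists>u\<in>C. Phi t u = z}"
  have KC: "K \<subseteq> C" unfolding K_def by blast
  have Kfwd: "Phi t z \<in> K" if hz: "z \<in> K" and ht: "0 \<le> t" for z t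
  proof -
    have zC: "z \<in> C" using hz KC by blast
    have "\<exists>u\<in>C. Phi s u = Phi t z" if s: "0 \<le> s" for s
    proof -
      obtain u where u: "u \<in> C" "Phi s u = z" using hz s unfolding K_def by blast
      have "Phi s (Phi t u) = Phi t z"
        using semi[of u s t] semi[of u t s] u CA s ht by (metis add.commute subsetD)
      then show ?thesis using invC u(1) ht by blast
    qed
    then show ?thesis unfolding K_def using invC[OF zC ht] by blast
  qed
  have Kbwd: "\<exists>v\<in>K. Phi t v = z" if hz: "z \<in> K" and ht: "0 \<le> t" for z t
  proof -
    have "\<forall>n::nat. \<exists>u. u \<in> C \<and> Phi (t + real n) u = z"
    proof
      fix n :: nat
      have "0 \<le> t + real n" using ht by simp
      then show "\<exists>u. u \<in> C \<and> Phi (t + real n) u = z" using hz unfolding K_def by blast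
    qed
    then obtain u where u: "\<And>n. u n \<in> C" "\<And>n. Phi (t + real n) (u n) = z" by metis
    define v where "v n = Phi (real n) (u n)" for n
    have vC: "v n \<in> C" for n unfolding v_def using invC u by simp
    have vz: "Phi t (v n) = z" for n
      unfolding v_def using semi[of "u n" t "real n"] u CA ht by auto
    obtain r vs where r: "strict_mono r" "vs \<in> C" "limitin T (v \<circ> r) vs sequentially"
      using SCC[of v, OF vC] by blast
    have l1: "limitin T (Phi t \<circ> (v \<circ> r)) (Phi t vs) sequentially" by (rule limPhi[OF r(3) ht])
    have "z \<in> topspace T" using hz KC CA topT AX by blast
    then have l2: "limitin T (Phi t \<circ> (v \<circ> r)) z sequentially"
      using vz by (simp add: o_def)
    have vsz: "Phi t vs = z" using limitin_Hausdorff_unique[OF l1 l2] hausT by simp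
    have "\<exists>p\<in>C. Phi s p = vs" if s: "0 \<le> s" for s
    proof -
      define M where "M = nat \<lceil>s\<rceil>"
      have rM: "s \<le> real (r (k + M))" for k
      proof -
        have "k + M \<le> r (k + M)" using seq_suble[OF r(1)] by blast
        moreover have "s \<le> real M" unfolding M_def by linarith
        ultimately show ?thesis by linarith
      qed
      define p where "p k = Phi (real (r (k + M)) - s) (u (r (k + M)))" for k
      have pC: "p k \<in> C" for k unfolding p_def using invC u rM by simp
      have ps: "Phi s (p k) = v (r (k + M))" for k
      proof -
        have "u (r (k+M)) \<in> \<A>" using u(1) CA by blast
        then show ?thesis
          unfolding p_def v_def using semi[of "u (r (k+M))" s "real (r (k + M)) - s"] rM[of k] s by auto
      qed
      obtain r' ps where r': "strict_mono r'" "ps \<in> C" "limitin T (p \<circ> r') ps sequentially"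
        using SCC[of p, OF pC] by blast
      have l3: "limitin T (Phi s \<circ> (p \<circ> r')) (Phi s ps) sequentially" by (rule limPhi[OF r'(3) s])
      have sm: "strict_mono (\<lambda>k. r' k + M)" using r'(1) by (simp add: strict_mono_def)
      have "limitin T ((v \<circ> r) \<circ> (\<lambda>k. r' k + M)) vs sequentially"
        using limitin_subsequence[OF sm r(3)] .
      moreover have "(v \<circ> r) \<circ> (\<lambda>k. r' k + M) = Phi s \<circ> (p \<circ> r')" using ps by (auto simp: o_def fun_eq_iff)
      ultimately have l4: "limitin T (Phi s \<circ> (p \<circ> r')) vs sequentially" by simp
      have "Phi s ps = vs" using limitin_Hausdorff_unique[OF l3 l4] hausT by simp
      then show ?thesis using r'(2) by blast
    qed
    then have "vs \<in> K" unfolding K_def using r(2) by blast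
    then show ?thesis using vsz by blast
  qed
  have Kinv: "sf_invariant D' Phi K"
    unfolding sf_invariant_def
  proof (intro allI impI conjI subsetI)
    fix t :: real and w assume t: "0 \<le> t" and w: "w \<in> sf_image D' Phi {t} K"
    then show "w \<in> K" unfolding sf_image_def using Kfwd by auto
  next
    fix t :: real and z assume t: "0 \<le> t" and z: "z \<in> K"
    obtain v where v: "v \<in> K" "Phi t v = z" using Kbwd[OF z t] by blast
    have "(t, v) \<in> D'" using dom' v(1) KC CA t by blast
    then show "z \<in> sf_image D' Phi {t} K" unfolding sf_image_def using v by blast
  qed
  have Ksc: "s_compact T K" unfolding s_compact_def
  proof (intro allI impI)
    fix z :: "nat \<Rightarrow> 'a" assume z: "\<forall>n. z n \<in> K"
    then have zC: "\<And>n. z n \<in> C" using KC by blast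
    obtain r zs where r: "strict_mono r" "zs \<in> C" "limitin T (z \<circ> r) zs sequentially"
      using SCC[of z, OF zC] by blast
    have "\<exists>u\<in>C. Phi s u = zs" if s: "0 \<le> s" for s
    proof -
      have "\<forall>n. \<exists>u. u \<in> C \<and> Phi s u = z n" using z s unfolding K_def by blast
      then obtain u where u: "\<And>n. u n \<in> C" "\<And>n. Phi s (u n) = z n" by metis
      have uC: "(u \<circ> r) n \<in> C" for n using u by simp
      obtain r' us where r': "strict_mono r'" "us \<in> C" "limitin T ((u \<circ> r) \<circ> r') us sequentially"
        using SCC[of "u \<circ> r", OF uC] by blast
      have l1: "limitin T (Phi s \<circ> ((u \<circ> r) \<circ> r')) (Phi s us) sequentially" by (rule limPhi[OF r'(3) s])
      have "Phi s \<circ> ((u \<circ> r) \<circ> r') = (z \<circ> r) \<circ> r'" using u by (auto simp: fun_eq_iff)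
      moreover have "limitin T ((z \<circ> r) \<circ> r') zs sequentially" using limitin_subsequence[OF r'(1) r(3)] .
      ultimately have l2: "limitin T (Phi s \<circ> ((u \<circ> r) \<circ> r')) zs sequentially" by simp
      have "Phi s us = zs" using limitin_Hausdorff_unique[OF l1 l2] hausT by simp
      then show ?thesis using r'(2) by blast
    qed
    then have "zs \<in> K" unfolding K_def using r(2) by blast
    then show "\<exists>r y. strict_mono r \<and> y \<in> K \<and> limitin T (z \<circ> r) y sequentially" using r by blast
  qed
  have KA: "K \<subseteq> A" using maxN[OF _ Ksc Kinv] KC CN' by blast
  have CtoA: "range \<gamma> \<subseteq> A" if h: "range \<gamma> \<subseteq> C"
  proof -
    have "\<gamma> s \<in> K" for s
    proof -
      have "\<exists>u\<in>C. Phi t u = \<gamma> s" if "0 \<le> t" for t using fs[of "s - t" s] that h by auto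
      then show ?thesis unfolding K_def using h by blast
    qed
    then show ?thesis using KA by blast
  qed
  have alphaOm: "range \<gamma> \<subseteq> A" if hy: "y \<in> alpha_limit X \<gamma>" "y \<in> Om" for y
  proof -
    obtain tn where tn: "filterlim tn at_bot sequentially" "limitin X (\<gamma> \<circ> tn) y sequentially"
      using hy(1) unfolding alpha_limit_def by blast
    have yT: "limitin T (\<gamma> \<circ> tn) y sequentially" using limA[OF tn(2)] gA by simp
    have Vn: "nbhd_of T (T interior_of N) A"
      using CN unfolding nbhd_of_def C_def by (simp add: interior_of_subset_topspace)
    obtain t0 where t0: "t0 > 0" "\<forall>t>t0. Phi t y \<in> T interior_of N" using Om_att[OF hy(2) Vn] by blast
    define T1 where "T1 = t0 + 1"
    have T1: "0 \<le> T1" "Phi T1 y \<in> T interior_of N" using t0 unfolding T1_def by auto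
    have lim1: "limitin T (Phi T1 \<circ> (\<gamma> \<circ> tn)) (Phi T1 y) sequentially" using limPhi[OF yT T1(1)] .
    have e1: "eventually (\<lambda>n. (Phi T1 \<circ> (\<gamma> \<circ> tn)) n \<in> T interior_of N) sequentially"
      using lim1 T1(2) openin_interior_of unfolding limitin_def by blast
    have "\<exists>t\<le>s. \<gamma> t \<in> N" for s
    proof -
      have e2: "eventually (\<lambda>n. tn n < s - T1) sequentially" using tn(1) filterlim_at_bot_dense by blast
      obtain n where n: "(Phi T1 \<circ> (\<gamma> \<circ> tn)) n \<in> T interior_of N" "tn n < s - T1"
        using eventually_conj[OF e1 e2] unfolding eventually_sequentially by blast
      have "\<gamma> (tn n + T1) = Phi T1 (\<gamma> (tn n))" using fs[of "tn n" "tn n + T1"] T1 by simp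
      then have "\<gamma> (tn n + T1) \<in> N" using n(1) interior_of_subset[of T N] by auto
      then show ?thesis using n(2) by (intro exI[of _ "tn n + T1"]) auto
    qed
    then have "range \<gamma> \<subseteq> C" using backC by blast
    then show ?thesis using CtoA by blast
  qed
  have p1: "omega_limit X \<gamma> \<inter> Astar \<noteq> {} \<longrightarrow> range \<gamma> \<subseteq> Astar"
  proof (intro impI subsetI)
    fix w assume ne: "omega_limit X \<gamma> \<inter> Astar \<noteq> {}" and w: "w \<in> range \<gamma>"
    then obtain s where ws: "w = \<gamma> s" by blast
    show "w \<in> Astar"
    proof (rule ccontr)
      assume "w \<notin> Astar"
      then have "\<gamma> s \<in> Om" using ws gA Astar by blast
      then have "omega_limit X \<gamma> \<subseteq> Om" using omega_C CN' N_Om by blast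
      then show False using ne Astar by blast
    qed
  qed
  have p2: "alpha_limit X \<gamma> \<inter> T closure_of A \<noteq> {} \<longrightarrow> range \<gamma> \<subseteq> A"
    using alphaOm CN' N_Om unfolding C_def by blast
  have p3: "x \<in> \<A> - (A \<union> Astar) \<longrightarrow> alpha_limit X \<gamma> \<subseteq> Astar \<and> omega_limit X \<gamma> \<subseteq> A"
  proof
    assume hx: "x \<in> \<A> - (A \<union> Astar)"
    then have xOm: "\<gamma> 0 \<in> Om" using assms(8) Astar by blast
    have "alpha_limit X \<gamma> \<subseteq> Astar"
    proof
      fix y assume y: "y \<in> alpha_limit X \<gamma>"
      then obtain tn where tn: "limitin X (\<gamma> \<circ> tn) y sequentially"
        unfolding alpha_limit_def by blast
      have "y \<in> \<A>" using limA[OF tn] gA by simp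
      moreover have "y \<notin> Om"
      proof
        assume "y \<in> Om" then have "range \<gamma> \<subseteq> A" using alphaOm y by blast
        then show False using hx assms(8) by blast
      qed
      ultimately show "y \<in> Astar" using Astar by blast
    qed
    moreover have "omega_limit X \<gamma> \<subseteq> A"
    proof
      fix y assume y: "y \<in> omega_limit X \<gamma>"
      have yC: "y \<in> C" using omega_C[OF xOm] y by blast
      obtain tn where tn: "filterlim tn at_top sequentially" "limitin X (\<gamma> \<circ> tn) y sequentially"
        using y unfolding omega_limit_def by blast
      have "\<exists>u\<in>C. Phi t u = y" if t: "0 \<le> t" for t
      proof -
        define g where "g n = \<gamma> (tn n - t)" for n
        have gg: "g n \<in> \<A>" for n unfolding g_def using gA by blast
        obtain r u where r: "strict_mono r" "u \<in> \<A>" "limitin T (g \<circ> r) u sequentially"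
          using SCA[of g, OF gg] by blast
        have fl: "filterlim (\<lambda>n. tn (r n) - t) at_top sequentially"
          unfolding filterlim_at_top_dense
        proof
          fix Z
          have "eventually (\<lambda>n. Z + t < tn n) sequentially" using tn(1) filterlim_at_top_dense by blast
          then have "eventually (\<lambda>n. Z + t < tn (r n)) sequentially"
            using eventually_subseq[OF r(1)] by blast
          then show "eventually (\<lambda>n. Z < tn (r n) - t) sequentially" by (auto elim: eventually_mono)
        qed
        have "g \<circ> r = \<gamma> \<circ> (\<lambda>n. tn (r n) - t)" unfolding g_def by (simp add: o_def)
        then have "u \<in> omega_limit X \<gamma>"
          unfolding omega_limit_def using fl limTX[OF r(3)] by auto
        then have uC: "u \<in> C" using omega_C[OF xOm] by blast
        have l1: "limitin T (Phi t \<circ> (g \<circ> r)) (Phi t u) sequentially" by (rule limPhi[OF r(3) t])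
        have "Phi t \<circ> (g \<circ> r) = (\<gamma> \<circ> tn) \<circ> r"
        proof (rule ext)
          fix k
          show "(Phi t \<circ> (g \<circ> r)) k = ((\<gamma> \<circ> tn) \<circ> r) k"
            using fs[of "tn (r k) - t" "tn (r k)"] t unfolding g_def by simp
        qed
        moreover have "limitin T ((\<gamma> \<circ> tn) \<circ> r) y sequentially"
          using limitin_subsequence[OF r(1)] limA[OF tn(2)] gA by auto
        ultimately have l2: "limitin T (Phi t \<circ> (g \<circ> r)) y sequentially" by simp
        have "Phi t u = y" using limitin_Hausdorff_unique[OF l1 l2] hausT by simp
        then show ?thesis using uC by blast
      qed
      then have "y \<in> K" unfolding K_def using yC by blast
      then show "y \<in> A" using KA by blast
    qed
    ultimately show "alpha_limit X \<gamma> \<subseteq> Astar \<and> omega_limit X \<gamma> \<subseteq> A" by blast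
  qed
  show ?thesis using p1 p2 p3 unfolding T_def by blast
qed
end
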